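(* Fix weights $w_i\ge0$ with $\sum_{i\in N}w_i=1$. There exists a unique PAF $\psi:\mathcal P^N\to\mathcal P$ that is Level-SP and satisfies weighted proportionality with respect to $\mathbf w$. It is the PAF whose associated CAF is $$\Psi(P_1,\dots,P_n)(a)=\mu_{\mathbf w}(P_1(a),\dots,P_n(a))\quad\text{for all }a\in\Lambda,\ (P_1,\dots,P_n)\in\mathcal C^N,$$ where $\mu_{\mathbf w}(\mathbf r)=\sup\{y\in[0,1]:\sum_{i:\,r_i\ge y}w_i\ge y\}$; in particular this PAF is certainty preserving.
   Context: Let $N=\{1,\dots,n\}$, $\Lambda\subseteq\mathbb R$ a nonempty Borel set, $\mathcal P$ the Borel probability measures on $\Lambda$, $\mathcal C$ the CDFs on $\Lambda$, $\pi(p)(a)=p(\{x\in\Lambda:x\le a\})$. A PAF is a map $\psi:\mathcal P^N\to\mathcal P$ with associated CAF $\Psi$ given by $\Psi(\pi(p_1),\dots,\pi(p_n))=\pi(\psi(p_1,\dots,p_n))$; $P_i=\pi(p_i)$. $\mathbf z_{-i}(z_i')$ is $\mathbf z$ with $i$-th coordinate replaced by $z_i'$. $\psi$ is Level-SP if for every $i$, $\mathbf P$, $P_i'$, $a$: $P_i(a)<\Psi(\mathbf P)(a)\Rightarrow\Psi(\mathbf P)(a)\le\Psi(\mathbf P_{-i}(P_i'))(a)$ and $P_i(a)>\Psi(\mathbf P)(a)\Rightarrow\Psi(\mathbf P)(a)\ge\Psi(\mathbf P_{-i}(P_i'))(a)$. $\delta_a$ denotes the Dirac mass at $a$. $\psi$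 satisfies weighted proportionality (w.r.t. $\mathbf w$) if $\psi(\delta_{a_1},\dots,\delta_{a_n})=\sum_{i\in N}w_i\delta_{a_i}$ for all $(a_1,\dots,a_n)\in\Lambda^N$. $\psi$ is certainty preserving if for every profile $\mathbf p$ and Borel $A\subseteq\Lambda$, $p_i(A)=1$ for all $i$ implies $\psi(\mathbf p)(A)=1$. *)

theory Defs
  imports "HOL-Probability.Probability"
begin

text \<open>Borel probability measures on \<Lambda>, represented as probability measures on the
  subspace measurable space (restrict_space borel \<Lambda>).\<close>
definition Pset :: "real set \<Rightarrow> real measure set" where
  "Pset \<Lambda> = {p. prob_space p \<and> sets p = sets (restrict_space borel \<Lambda>)}"

definition cdf_pi :: "real set \<Rightarrow> real measure \<Rightarrow> real \<Rightarrow> real" where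
  "cdf_pi \<Lambda> p a = measure p {x\<in>\<Lambda>. x \<le> a}"

definition profiles :: "nat \<Rightarrow> real set \<Rightarrow> (nat \<Rightarrow> real measure) set" where
  "profiles n \<Lambda> = PiE {1..n} (\<lambda>_. Pset \<Lambda>)"

definition is_PAF :: "nat \<Rightarrow> real set \<Rightarrow> ((nat \<Rightarrow> real measure) \<Rightarrow> real measure) \<Rightarrow> bool" where
  "is_PAF n \<Lambda> \<psi> = (\<forall>p\<in>profiles n \<Lambda>. \<psi> p \<in> Pset \<Lambda>)"

text \<open>Level strategy-proofness, stated via the associated CAF:
  Psi(pi(p_1),...,pi(p_n)) = pi(psi(p)).\<close>
definition level_SP :: "nat \<Rightarrow> real set \<Rightarrow> ((nat \<Rightarrow> real measure) \<Rightarrow> real measure) \<Rightarrow> bool" where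
  "level_SP n \<Lambda> \<psi> =
    (\<forall>i\<in>{1..n}. \<forall>p\<in>profiles n \<Lambda>. \<forall>p'\<in>Pset \<Lambda>. \<forall>a\<in>\<Lambda>.
      (cdf_pi \<Lambda> (p i) a < cdf_pi \<Lambda> (\<psi> p) a \<longrightarrow>
         cdf_pi \<Lambda> (\<psi> p) a \<le> cdf_pi \<Lambda> (\<psi> (p(i := p'))) a) \<and>
      (cdf_pi \<Lambda> (p i) a > cdf_pi \<Lambda> (\<psi> p) a \<longrightarrow>
         cdf_pi \<Lambda> (\<psi> p) a \<ge> cdf_pi \<Lambda> (\<psi> (p(i := p'))) a))"

definition dirac_on :: "real set \<Rightarrow> real \<Rightarrow> real measure" where
  "dirac_on \<Lambda> a = return (restrict_space borel \<Lambda>) a"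

definition mix_dirac :: "nat \<Rightarrow> real set \<Rightarrow> (nat \<Rightarrow> real) \<Rightarrow> (nat \<Rightarrow> real) \<Rightarrow> real measure" where
  "mix_dirac n \<Lambda> w a = measure_of \<Lambda> (sets (restrict_space borel \<Lambda>))
     (\<lambda>A. \<Sum>i\<in>{1..n}. ennreal (w i) * indicator A (a i))"

definition weighted_prop ::
  "nat \<Rightarrow> real set \<Rightarrow> (nat \<Rightarrow> real) \<Rightarrow> ((nat \<Rightarrow> real measure) \<Rightarrow> real measure) \<Rightarrow> bool" where
  "weighted_prop n \<Lambda> w \<psi> =
    (\<forall>a. (\<forall>i\<in>{1..n}. a i \<in> \<Lambda>) \<longrightarrow>
       \<psi> (\<lambda>i\<in>{1..n}. dirac_on \<Lambda> (a i)) = mix_dirac n \<Lambda> w a)"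

definition certainty_preserving :: "nat \<Rightarrow> real set \<Rightarrow> ((nat \<Rightarrow> real measure) \<Rightarrow> real measure) \<Rightarrow> bool" where
  "certainty_preserving n \<Lambda> \<psi> =
    (\<forall>p\<in>profiles n \<Lambda>. \<forall>A\<in>sets (restrict_space borel \<Lambda>).
       (\<forall>i\<in>{1..n}. measure (p i) A = 1) \<longrightarrow> measure (\<psi> p) A = 1)"

definition mu_w :: "nat \<Rightarrow> (nat \<Rightarrow> real) \<Rightarrow> (nat \<Rightarrow> real) \<Rightarrow> real" where
  "mu_w n w r = Sup {y\<in>{0..1}. (\<Sum>i\<in>{i\<in>{1..n}. r i \<ge> y}. w i) \<ge> y}"

end

theory Submission
  imports Defs
begin


definition Sw :: "nat \<Rightarrow> (nat \<Rightarrow> real) \<Rightarrow> (nat \<Rightarrow> real) \<Rightarrow> real \<Rightarrow> real" where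
  "Sw n w r y = (\<Sum>i\<in>{i\<in>{1..n}. r i \<ge> y}. w i)"
definition Tw :: "nat \<Rightarrow> (nat \<Rightarrow> real) \<Rightarrow> (nat \<Rightarrow> real) \<Rightarrow> real \<Rightarrow> real" where
  "Tw n w r y = (\<Sum>i\<in>{i\<in>{1..n}. r i > y}. w i)"

lemma mu_set_bdd: fixes w r :: "nat \<Rightarrow> real" shows "bdd_above {y\<in>{0..1}. (\<Sum>i\<in>{i\<in>{1..n}. r i \<ge> y}. w i) \<ge> y}"
  by (rule bdd_aboveI[of _ 1]) auto

lemma mu_set_ne: fixes w r :: "nat \<Rightarrow> real" assumes "\<forall>i\<in>{1..n}. 0 \<le> w i"
  shows "0 \<in> {y\<in>{0..1}. (\<Sum>i\<in>{i\<in>{1..n}. r i \<ge> y}. w i) \<ge> y}"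
proof -
  have "0 \<le> (\<Sum>i\<in>{i\<in>{1..n}. r i \<ge> 0}. w i)" using assms by (intro sum_nonneg) auto
  thus ?thesis by simp
qed

lemma mu_char:
  assumes w: "\<forall>i\<in>{1..n}. 0 \<le> w i" and c: "0 \<le> c" "c \<le> 1"
    and S: "Sw n w r c \<ge> c" and T: "Tw n w r c \<le> c"
  shows "mu_w n w r = c"
proof -
  let ?A = "{y\<in>{0..1}. (\<Sum>i\<in>{i\<in>{1..n}. r i \<ge> y}. w i) \<ge> y}"
  have cin: "c \<in> ?A" using S c by (auto simp: Sw_def)
  have le: "y \<le> c" if "y \<in> ?A" for y
  proof (rule ccontr)
    assume "\<not> y \<le> c"
    hence "y > c" by simp
    have "(\<Sum>i\<in>{i\<in>{1..n}. r i \<ge> y}. w i) \<le> (\<Sum>i\<in>{i\<in>{1..n}. r i > c}. w i)"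
      using \<open>y > c\<close> w by (intro sum_mono2) auto
    also have "\<dots> \<le> c" using T by (simp add: Tw_def)
    finally show False using that \<open>y > c\<close> by auto
  qed
  show ?thesis unfolding mu_w_def
    by (intro antisym cSup_least cSup_upper cin mu_set_bdd) (use cin le in auto)
qed

lemma mu_props:
  assumes w: "\<forall>i\<in>{1..n}. 0 \<le> w i" and w1: "(\<Sum>i\<in>{1..n}. w i) = 1"
  shows "0 \<le> mu_w n w r" "mu_w n w r \<le> 1" "Sw n w r (mu_w n w r) \<ge> mu_w n w r"
    "Tw n w r (mu_w n w r) \<le> mu_w n w r"
proof -
  let ?A = "{y\<in>{0..1}. (\<Sum>i\<in>{i\<in>{1..n}. r i \<ge> y}. w i) \<ge> y}"
  let ?c = "mu_w n w r"
  have ne: "?A \<noteq> {}" using mu_set_ne[OF w] by blast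
  have up: "y \<le> ?c" if "y \<in> ?A" for y
    unfolding mu_w_def by (rule cSup_upper[OF that mu_set_bdd])
  show c0: "0 \<le> ?c" using up[OF mu_set_ne[OF w]] .
  show c1: "?c \<le> 1" unfolding mu_w_def by (rule cSup_least[OF ne]) auto
  have Sle: "Sw n w r y \<le> 1" for y
  proof -
    have "Sw n w r y \<le> (\<Sum>i\<in>{1..n}. w i)" unfolding Sw_def using w by (intro sum_mono2) auto
    thus ?thesis using w1 by simp
  qed
  show "Sw n w r ?c \<ge> ?c"
  proof (rule ccontr)
    assume neg: "\<not> Sw n w r ?c \<ge> ?c"
    define K where "K = {i\<in>{1..n}. r i < ?c}"
    define e where "e = Max (insert (Sw n w r ?c) (r ` K))"
    have fin: "finite (insert (Sw n w r ?c) (r ` K))" unfolding K_def by auto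
    have e_lt: "e < ?c" unfolding e_def using neg fin
      by (subst Max_less_iff) (auto simp: K_def)
    have Se: "Sw n w r ?c \<le> e" unfolding e_def using fin by auto
    have rK: "i \<in> K \<Longrightarrow> r i \<le> e" for i unfolding e_def using fin by auto
    have "y \<le> e" if "y \<in> ?A" for y
    proof (rule ccontr)
      assume "\<not> y \<le> e"
      hence ye: "y > e" by simp
      have yc: "y \<le> ?c" using up[OF that] .
      have "{i\<in>{1..n}. r i \<ge> y} = {i\<in>{1..n}. r i \<ge> ?c}"
      proof safe
        fix i assume "i \<in> {1..n}" "y \<le> r i"
        show "?c \<le> r i"
        proof (rule ccontr)
          assume "\<not> ?c \<le> r i"
          hence "i \<in> K" using \<open>i \<in> {1..n}\<close> by (auto simp: K_def)
          thus False using rK ye \<open>y \<le> r i\<close> by fastforce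
        qed
      next
        fix i assume "i \<in> {1..n}" "?c \<le> r i" thus "y \<le> r i" using yc by simp
      qed
      hence "Sw n w r y = Sw n w r ?c" by (simp add: Sw_def)
      thus False using that Se ye by (auto simp: Sw_def)
    qed
    hence "?c \<le> e" unfolding mu_w_def by (intro cSup_least[OF ne]) auto
    thus False using e_lt by simp
  qed
  show "Tw n w r ?c \<le> ?c"
  proof (rule ccontr)
    assume neg: "\<not> Tw n w r ?c \<le> ?c"
    define K where "K = {i\<in>{1..n}. r i > ?c}"
    have "K \<noteq> {}"
    proof
      assume "K = {}" hence "{i\<in>{1..n}. r i > ?c} = {}" by (simp add: K_def)
      hence "Tw n w r ?c = 0" unfolding Tw_def by (metis sum.empty)
      thus False using neg c0 by simp
    qed
    have finK: "finite K" by (simp add: K_def)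
    define y where "y = min (Tw n w r ?c) (Min (r ` K))"
    have "Min (r ` K) > ?c" using \<open>K \<noteq> {}\<close> finK by (subst Min_gr_iff) (auto simp: K_def)
    hence yc: "y > ?c" using neg by (simp add: y_def)
    have T1: "Tw n w r ?c \<le> 1"
    proof -
      have "Tw n w r ?c \<le> (\<Sum>i\<in>{1..n}. w i)" unfolding Tw_def using w by (intro sum_mono2) auto
      thus ?thesis using w1 by simp
    qed
    have "Tw n w r ?c \<le> Sw n w r y"
      unfolding Tw_def Sw_def
    proof (rule sum_mono2)
      show "{i \<in> {1..n}. ?c < r i} \<subseteq> {i \<in> {1..n}. y \<le> r i}"
      proof safe
        fix i assume "i \<in> {1..n}" "?c < r i"
        hence "i \<in> K" by (simp add: K_def)
        hence "Min (r ` K) \<le> r i" using finK by simp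
        thus "y \<le> r i" by (simp add: y_def)
      qed
    qed (use w in auto)
    hence "y \<in> ?A" using yc c0 T1 by (auto simp: y_def Sw_def)
    thus False using up yc by fastforce
  qed
qed

lemma mu_upper:
  fixes w r :: "nat \<Rightarrow> real"
  assumes "0 \<le> y" "y \<le> 1" "Sw n w r y \<ge> y"
  shows "y \<le> mu_w n w r"
  unfolding mu_w_def by (rule cSup_upper[OF _ mu_set_bdd]) (use assms in \<open>auto simp: Sw_def\<close>)

lemma mu_least:
  fixes w r :: "nat \<Rightarrow> real"
  assumes w: "\<forall>i\<in>{1..n}. 0 \<le> w i" and "\<And>y. 0 \<le> y \<Longrightarrow> y \<le> 1 \<Longrightarrow> Sw n w r y \<ge> y \<Longrightarrow> y \<le> m"
  shows "mu_w n w r \<le> m"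
  unfolding mu_w_def
proof (rule cSup_least)
  show "{y \<in> {0..1}. y \<le> (\<Sum>i\<in>{i \<in> {1..n}. y \<le> r i}. w i)} \<noteq> {}" using mu_set_ne[OF w] by blast
qed (auto simp: Sw_def intro: assms(2))

lemma mu_SP_low:
  assumes w: "\<forall>i\<in>{1..n}. 0 \<le> w i" and w1: "(\<Sum>i\<in>{1..n}. w i) = 1"
    and lt: "r i < mu_w n w r"
  shows "mu_w n w r \<le> mu_w n w (r(i := t))"
proof -
  let ?m = "mu_w n w r"
  note P = mu_props[OF w w1, of r]
  have "Sw n w r ?m \<le> Sw n w (r(i:=t)) ?m"
    unfolding Sw_def using w lt by (intro sum_mono2) auto
  thus ?thesis using P by (intro mu_upper[of "mu_w n w r" n w "r(i:=t)"]) auto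
qed

lemma mu_SP_high:
  assumes w: "\<forall>i\<in>{1..n}. 0 \<le> w i" and w1: "(\<Sum>i\<in>{1..n}. w i) = 1"
    and gt: "r i > mu_w n w r"
  shows "mu_w n w (r(i := t)) \<le> mu_w n w r"
proof (rule mu_least[OF w])
  let ?m = "mu_w n w r"
  note P = mu_props[OF w w1, of r]
  fix y assume y: "0 \<le> y" "y \<le> 1" "y \<le> Sw n w (r(i := t)) y"
  show "y \<le> ?m"
  proof (rule ccontr)
    assume "\<not> y \<le> ?m" hence ym: "y > ?m" by simp
    have "Sw n w (r(i := t)) y \<le> Tw n w r ?m"
      unfolding Sw_def Tw_def
    proof (rule sum_mono2)
      show "{ia \<in> {1..n}. y \<le> (r(i := t)) ia} \<subseteq> {i \<in> {1..n}. ?m < r i}"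
        using ym gt by (auto split: if_splits)
    qed (use w in auto)
    thus False using P(4) y ym by linarith
  qed
qed

lemma mu_lip:
  assumes w: "\<forall>i\<in>{1..n}. 0 \<le> w i" and w1: "(\<Sum>i\<in>{1..n}. w i) = 1"
    and d: "0 \<le> d" and le: "\<forall>i\<in>{1..n}. r i \<le> r' i \<and> r' i \<le> r i + d"
  shows "mu_w n w r \<le> mu_w n w r'" "mu_w n w r' \<le> mu_w n w r + d"
proof -
  note P = mu_props[OF w w1, of r] and P' = mu_props[OF w w1, of r']
  show "mu_w n w r \<le> mu_w n w r'"
  proof (rule mu_least[OF w])
    fix y assume y: "0 \<le> y" "y \<le> 1" "y \<le> Sw n w r y"
    have "Sw n w r y \<le> Sw n w r' y"
      unfolding Sw_def using w le by (intro sum_mono2) force+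
    thus "y \<le> mu_w n w r'" using y by (intro mu_upper[of y n w r']) auto
  qed
  let ?m = "mu_w n w r'"
  show "?m \<le> mu_w n w r + d"
  proof (cases "?m - d \<le> 0")
    case True thus ?thesis using P by linarith
  next
    case False
    have "Sw n w r' ?m \<le> Sw n w r (?m - d)"
      unfolding Sw_def using w le by (intro sum_mono2) force+
    hence "?m - d \<le> mu_w n w r" using False P' d by (intro mu_upper[of "?m - d" n w r]) auto
    thus ?thesis by simp
  qed
qed

lemma mu_indicator:
  assumes w: "\<forall>i\<in>{1..n}. 0 \<le> w i" and w1: "(\<Sum>i\<in>{1..n}. w i) = 1"
    and H: "H \<subseteq> {1..n}"
  shows "mu_w n w (\<lambda>i. if i \<in> H then 1 else 0) = sum w H"
proof (rule mu_char[OF w])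
  have "sum w H \<le> sum w {1..n}" using H w by (intro sum_mono2) auto
  moreover have "0 \<le> sum w H" using H w by (intro sum_nonneg) auto
  ultimately show "0 \<le> sum w H" "sum w H \<le> 1" using w1 by auto
  show "sum w H \<le> Sw n w (\<lambda>i. if i \<in> H then 1 else 0) (sum w H)"
    unfolding Sw_def using w H \<open>sum w H \<le> 1\<close> by (intro sum_mono2) (auto intro: finite_subset)
  show "Tw n w (\<lambda>i. if i \<in> H then 1 else 0) (sum w H) \<le> sum w H"
    unfolding Tw_def using w H \<open>0 \<le> sum w H\<close> by (intro sum_mono2) (auto intro: finite_subset)
qed



lemma Pset_D:
  assumes "p \<in> Pset \<Lambda>"
  shows "prob_space p" "sets p = sets (restrict_space borel \<Lambda>)" "space p = \<Lambda>"
proof -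
  show "prob_space p" "sets p = sets (restrict_space borel \<Lambda>)" using assms by (auto simp: Pset_def)
  hence "space p = space (restrict_space borel \<Lambda>)" by (metis sets_eq_imp_space_eq)
  thus "space p = \<Lambda>" by (simp add: space_restrict_space)
qed

lemma sets_restrict_borel_iff:
  assumes "\<Lambda> \<in> sets borel"
  shows "A \<in> sets (restrict_space borel \<Lambda>) \<longleftrightarrow> A \<in> sets borel \<and> A \<subseteq> \<Lambda>"
  using assms by (auto simp: sets_restrict_space_iff)

lemma ident_meas:
  assumes "p \<in> Pset \<Lambda>"
  shows "(\<lambda>x. x) \<in> measurable p borel"
proof -
  have "(\<lambda>x::real. x) \<in> measurable (restrict_space borel \<Lambda>) borel"
    by (intro measurable_restrict_space1) simp
  thus ?thesis using Pset_D(2)[OF assms] by (simp cong: measurable_cong_sets)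
qed

lemma tilde_props:
  assumes L: "\<Lambda> \<in> sets borel" and p: "p \<in> Pset \<Lambda>"
  shows "real_distribution (distr p borel (\<lambda>x. x))"
    "cdf (distr p borel (\<lambda>x. x)) x = cdf_pi \<Lambda> p x"
    "B \<in> sets borel \<Longrightarrow> measure (distr p borel (\<lambda>x. x)) B = measure p (B \<inter> \<Lambda>)"
proof -
  interpret prob_space p using Pset_D[OF p] by simp
  show "real_distribution (distr p borel (\<lambda>x. x))"
    using ident_meas[OF p] by simp
  show *: "B \<in> sets borel \<Longrightarrow> measure (distr p borel (\<lambda>x. x)) B = measure p (B \<inter> \<Lambda>)" for B
    using ident_meas[OF p] Pset_D(3)[OF p] by (simp add: measure_distr)
  have "{x\<in>\<Lambda>. x \<le> a} = {..a} \<inter> \<Lambda>" for a by auto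
  thus "cdf (distr p borel (\<lambda>x. x)) x = cdf_pi \<Lambda> p x"
    by (simp add: cdf_def cdf_pi_def *)
qed

lemma cdf_pi_sets:
  assumes L: "\<Lambda> \<in> sets borel" and p: "p \<in> Pset \<Lambda>"
  shows "{x\<in>\<Lambda>. x \<le> a} \<in> sets p"
proof -
  have "{x\<in>\<Lambda>. x \<le> a} = {..a} \<inter> \<Lambda>" by auto
  thus ?thesis using Pset_D(2)[OF p] L by (simp add: sets_restrict_borel_iff)
qed

lemma cdf_pi_ext:
  assumes L: "\<Lambda> \<in> sets borel" and p: "p \<in> Pset \<Lambda>" and q: "q \<in> Pset \<Lambda>"
    and eq: "\<forall>a\<in>\<Lambda>. cdf_pi \<Lambda> p a = cdf_pi \<Lambda> q a"
  shows "cdf_pi \<Lambda> p x = cdf_pi \<Lambda> q x"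
proof -
  interpret P: prob_space p using Pset_D[OF p] by simp
  interpret Q: prob_space q using Pset_D[OF q] by simp
  define A where "A = {y\<in>\<Lambda>. y \<le> x}"
  show ?thesis
  proof (cases "A = {}")
    case True hence "{y\<in>\<Lambda>. y \<le> x} = {}" by (simp add: A_def)
    thus ?thesis unfolding cdf_pi_def by (metis measure_empty)
  next
    case ne: False
    have bdd: "bdd_above A" by (rule bdd_aboveI[of _ x]) (auto simp: A_def)
    define s where "s = Sup A"
    have up: "y \<in> A \<Longrightarrow> y \<le> s" for y unfolding s_def using bdd by (intro cSup_upper)
    have sx: "s \<le> x" unfolding s_def using ne by (intro cSup_least) (auto simp: A_def)
    show ?thesis
    proof (cases "s \<in> \<Lambda>")
      case True
      have "A = {y\<in>\<Lambda>. y \<le> s}" using up sx by (auto simp: A_def)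
      hence "cdf_pi \<Lambda> p x = cdf_pi \<Lambda> p s" "cdf_pi \<Lambda> q x = cdf_pi \<Lambda> q s"
        by (simp_all add: cdf_pi_def A_def)
      thus ?thesis using eq True by simp
    next
      case False
      have "\<exists>a\<in>A. s - 1 / real (Suc k) < a" for k
      proof -
        have "s - 1 / real (Suc k) < Sup A" by (simp add: s_def)
        then obtain a where "a \<in> A" "s - 1 / real (Suc k) < a" using less_cSupE[OF _ ne] by blast
        thus ?thesis by blast
      qed
      then obtain a where a: "\<And>k. a k \<in> A" "\<And>k. s - 1 / real (Suc k) < a k" by metis
      define b where "b k = Max (a ` {..k})" for k
      have bA: "b k \<in> A" for k
      proof -
        have "Max (a ` {..k}) \<in> a ` {..k}" by (intro Max_in) auto
        then obtain j where "Max (a ` {..k}) = a j" by blast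
        thus ?thesis using a(1)[of j] unfolding b_def by simp
      qed
      have ab: "a k \<le> b k" for k unfolding b_def by auto
      have inc: "incseq b" unfolding incseq_def b_def by (auto intro!: Max_mono)
      define B where "B k = {y\<in>\<Lambda>. y \<le> b k}" for k
      have incB: "incseq B" using inc unfolding B_def incseq_def by fastforce
      have UB: "(\<Union>k. B k) = A"
      proof safe
        fix y k assume "y \<in> B k" thus "y \<in> A" using bA[of k] by (auto simp: B_def A_def)
      next
        fix y assume yA: "y \<in> A"
        have "y \<noteq> s" using yA False by (auto simp: A_def)
        hence "y < s" using up[OF yA] by simp
        then obtain k where "1 / real (Suc k) < s - y"
          by (metis diff_gt_0_iff_gt nat_approx_posE)
        hence "y < b k" using a(2)[of k] ab[of k] by linarith
        hence "y \<in> B k" using yA by (auto simp: B_def A_def)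
        thus "y \<in> (\<Union>k. B k)" by blast
      qed
      have sP: "range B \<subseteq> sets p" "range B \<subseteq> sets q"
        using cdf_pi_sets[OF L p] cdf_pi_sets[OF L q] by (auto simp: B_def)
      have "(\<lambda>k. measure p (B k)) \<longlonglongrightarrow> measure p A"
        using P.finite_Lim_measure_incseq[OF sP(1) incB] UB by simp
      moreover have "(\<lambda>k. measure q (B k)) \<longlonglongrightarrow> measure q A"
        using Q.finite_Lim_measure_incseq[OF sP(2) incB] UB by simp
      moreover have "measure p (B k) = measure q (B k)" for k
        using eq bA[of k] by (auto simp: B_def A_def cdf_pi_def)
      ultimately have "measure p A = measure q A" using LIMSEQ_unique by auto
      thus ?thesis by (simp add: cdf_pi_def A_def)
    qed
  qed
qed

lemma Pset_unique:
  assumes L: "\<Lambda> \<in> sets borel" and p: "p \<in> Pset \<Lambda>" and q: "q \<in> Pset \<Lambda>"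
    and eq: "\<forall>a\<in>\<Lambda>. cdf_pi \<Lambda> p a = cdf_pi \<Lambda> q a"
  shows "p = q"
proof -
  have "distr p borel (\<lambda>x. x) = distr q borel (\<lambda>x. x)"
    using tilde_props[OF L p] tilde_props[OF L q] cdf_pi_ext[OF L p q eq]
    by (intro cdf_unique) auto
  hence E: "emeasure (distr p borel (\<lambda>x. x)) A = emeasure (distr q borel (\<lambda>x. x)) A" for A by simp
  show ?thesis
  proof (rule measure_eqI)
    show "sets p = sets q" using Pset_D(2)[OF p] Pset_D(2)[OF q] by simp
    fix A assume "A \<in> sets p"
    hence A: "A \<in> sets borel" "A \<subseteq> \<Lambda>" using Pset_D(2)[OF p] L by (auto simp: sets_restrict_borel_iff)
    have "emeasure p A = emeasure (distr p borel (\<lambda>x. x)) A"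
      using A ident_meas[OF p] Pset_D(3)[OF p] by (simp add: emeasure_distr Int_absorb2)
    also have "\<dots> = emeasure (distr q borel (\<lambda>x. x)) A" by (rule E)
    also have "\<dots> = emeasure q A"
      using A ident_meas[OF q] Pset_D(3)[OF q] by (simp add: emeasure_distr Int_absorb2)
    finally show "emeasure p A = emeasure q A" .
  qed
qed

lemma dirac_props:
  assumes L: "\<Lambda> \<in> sets borel" and a: "a \<in> \<Lambda>"
  shows "dirac_on \<Lambda> a \<in> Pset \<Lambda>" "cdf_pi \<Lambda> (dirac_on \<Lambda> a) x = (if a \<le> x then 1 else 0)"
proof -
  show P: "dirac_on \<Lambda> a \<in> Pset \<Lambda>" unfolding Pset_def dirac_on_def
    using a by (auto intro!: prob_space_return simp: space_restrict_space)
  have "cdf_pi \<Lambda> (dirac_on \<Lambda> a) x = indicator {y\<in>\<Lambda>. y \<le> x} a"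
    unfolding cdf_pi_def dirac_on_def
    using cdf_pi_sets[OF L P, of x] by (intro measure_return) (simp add: Pset_def dirac_on_def)
  thus "cdf_pi \<Lambda> (dirac_on \<Lambda> a) x = (if a \<le> x then 1 else 0)" using a by simp
qed

lemma mix_props:
  assumes L: "\<Lambda> \<in> sets borel" and a: "\<forall>i\<in>{1..n}. a i \<in> \<Lambda>"
    and w: "\<forall>i\<in>{1..n}. 0 \<le> w i" and w1: "(\<Sum>i\<in>{1..n}. w i) = 1"
  shows "mix_dirac n \<Lambda> w a \<in> Pset \<Lambda>"
    "A \<in> sets (restrict_space borel \<Lambda>) \<Longrightarrow> emeasure (mix_dirac n \<Lambda> w a) A = (\<Sum>i\<in>{1..n}. ennreal (w i) * indicator A (a i))"
    "cdf_pi \<Lambda> (mix_dirac n \<Lambda> w a) x = (\<Sum>i\<in>{i\<in>{1..n}. a i \<le> x}. w i)"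
proof -
  let ?R = "restrict_space borel \<Lambda>"
  let ?M = "sets ?R"
  let ?mu = "\<lambda>A. \<Sum>i\<in>{1..n}. ennreal (w i) * indicator A (a i)"
  have sa: "sigma_algebra \<Lambda> ?M" using sets.sigma_algebra_axioms[of ?R] by (simp add: space_restrict_space)
  have pow: "?M \<subseteq> Pow \<Lambda>" using sa by (simp add: sigma_algebra_iff2)
  have sets_eq: "sets (mix_dirac n \<Lambda> w a) = ?M"
    unfolding mix_dirac_def by (simp add: sets_measure_of[OF pow] sigma_algebra.sigma_sets_eq[OF sa])
  have ca: "countably_additive ?M ?mu"
  proof (rule countably_additiveI)
    fix A :: "nat \<Rightarrow> real set" assume "range A \<subseteq> ?M" "disjoint_family A"
    have "(\<Sum>k. ?mu (A k)) = (\<Sum>i\<in>{1..n}. \<Sum>k. ennreal (w i) * indicator (A k) (a i))"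
      by (rule suminf_sum) (simp add: summableI)
    also have "\<dots> = ?mu (\<Union>k. A k)"
      using suminf_indicator[OF \<open>disjoint_family A\<close>] by simp
    finally show "(\<Sum>k. ?mu (A k)) = ?mu (\<Union>k. A k)" .
  qed
  have pos: "positive ?M ?mu" by (simp add: positive_def)
  show em: "A \<in> ?M \<Longrightarrow> emeasure (mix_dirac n \<Lambda> w a) A = ?mu A" for A
    unfolding mix_dirac_def by (rule emeasure_measure_of_sigma[OF sa pos ca])
  have sp: "space (mix_dirac n \<Lambda> w a) = \<Lambda>"
    using sets_eq_imp_space_eq[of "mix_dirac n \<Lambda> w a" ?R] sets_eq by (simp add: space_restrict_space)
  have "\<Lambda> \<in> ?M" using L by (simp add: sets_restrict_borel_iff)
  hence "emeasure (mix_dirac n \<Lambda> w a) \<Lambda> = (\<Sum>i\<in>{1..n}. ennreal (w i))"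
    using em[of \<Lambda>] a by simp
  also have "\<dots> = ennreal (\<Sum>i\<in>{1..n}. w i)" using w by (intro sum_ennreal) auto
  finally have "emeasure (mix_dirac n \<Lambda> w a) (space (mix_dirac n \<Lambda> w a)) = 1" using w1 sp by simp
  hence ps: "prob_space (mix_dirac n \<Lambda> w a)" by (rule prob_spaceI)
  show P: "mix_dirac n \<Lambda> w a \<in> Pset \<Lambda>" using ps sets_eq by (simp add: Pset_def)
  have set: "{y\<in>\<Lambda>. y \<le> x} \<in> ?M" using cdf_pi_sets[OF L P, of x] sets_eq by simp
  have "?mu {y\<in>\<Lambda>. y \<le> x} = (\<Sum>i\<in>{1..n}. ennreal (if a i \<le> x then w i else 0))"
    using a by (intro sum.cong) auto
  also have "\<dots> = ennreal (\<Sum>i\<in>{1..n}. (if a i \<le> x then w i else 0))"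
    using w by (intro sum_ennreal) auto
  also have "(\<Sum>i\<in>{1..n}. (if a i \<le> x then w i else 0)) = (\<Sum>i\<in>{i\<in>{1..n}. a i \<le> x}. w i)"
    by (simp only: sum.inter_filter[symmetric] finite_atLeastAtMost)
  finally have "emeasure (mix_dirac n \<Lambda> w a) {y\<in>\<Lambda>. y \<le> x} = ennreal (\<Sum>i\<in>{i\<in>{1..n}. a i \<le> x}. w i)"
    using em[OF set] by simp
  moreover have "0 \<le> (\<Sum>i\<in>{i\<in>{1..n}. a i \<le> x}. w i)" using w by (intro sum_nonneg) auto
  ultimately show "cdf_pi \<Lambda> (mix_dirac n \<Lambda> w a) x = (\<Sum>i\<in>{i\<in>{1..n}. a i \<le> x}. w i)"
    unfolding cdf_pi_def by (simp add: measure_def)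
qed



definition Gf :: "nat \<Rightarrow> (nat \<Rightarrow> real) \<Rightarrow> real set \<Rightarrow> (nat \<Rightarrow> real measure) \<Rightarrow> real \<Rightarrow> real" where
  "Gf n w \<Lambda> p x = mu_w n w (\<lambda>i. cdf_pi \<Lambda> (p i) x)"

definition psi :: "nat \<Rightarrow> (nat \<Rightarrow> real) \<Rightarrow> real set \<Rightarrow> (nat \<Rightarrow> real measure) \<Rightarrow> real measure" where
  "psi n w \<Lambda> p = restrict_space (interval_measure (Gf n w \<Lambda> p)) \<Lambda>"

lemma cdfpi_props:
  assumes L: "\<Lambda> \<in> sets borel" and p: "p \<in> Pset \<Lambda>"
  shows "0 \<le> cdf_pi \<Lambda> p x" "cdf_pi \<Lambda> p x \<le> 1"
    "x \<le> y \<Longrightarrow> cdf_pi \<Lambda> p x \<le> cdf_pi \<Lambda> p y"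
    "continuous (at_right x) (cdf_pi \<Lambda> p)"
    "(cdf_pi \<Lambda> p \<longlongrightarrow> 0) at_bot" "(cdf_pi \<Lambda> p \<longlongrightarrow> 1) at_top"
proof -
  interpret real_distribution "distr p borel (\<lambda>x. x)" by (rule tilde_props[OF L p])
  have eq: "cdf (distr p borel (\<lambda>x. x)) = cdf_pi \<Lambda> p" using tilde_props(2)[OF L p] by auto
  show "0 \<le> cdf_pi \<Lambda> p x" "cdf_pi \<Lambda> p x \<le> 1"
    "x \<le> y \<Longrightarrow> cdf_pi \<Lambda> p x \<le> cdf_pi \<Lambda> p y"
    "continuous (at_right x) (cdf_pi \<Lambda> p)"
    "(cdf_pi \<Lambda> p \<longlongrightarrow> 0) at_bot" "(cdf_pi \<Lambda> p \<longlongrightarrow> 1) at_top"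
    using cdf_nonneg cdf_bounded_prob cdf_nondecreasing cdf_is_right_cont cdf_lim_at_bot cdf_lim_at_top_prob
    unfolding eq by auto
qed

lemma profiles_D: "p \<in> profiles n \<Lambda> \<Longrightarrow> i \<in> {1..n} \<Longrightarrow> p i \<in> Pset \<Lambda>"
  by (auto simp: profiles_def)

context
  fixes n :: nat and \<Lambda> :: "real set" and w :: "nat \<Rightarrow> real" and p :: "nat \<Rightarrow> real measure"
  assumes L: "\<Lambda> \<in> sets borel" and w: "\<forall>i\<in>{1..n}. 0 \<le> w i" and w1: "(\<Sum>i\<in>{1..n}. w i) = 1"
    and p: "p \<in> profiles n \<Lambda>"
begin

abbreviation "F i \<equiv> cdf_pi \<Lambda> (p i)"
abbreviation "G \<equiv> Gf n w \<Lambda> p"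

lemma n_pos: "1 \<le> n"
  using w1 by (cases n) auto

lemma Fp: "i \<in> {1..n} \<Longrightarrow> 0 \<le> F i x" "i \<in> {1..n} \<Longrightarrow> F i x \<le> 1"
    "i \<in> {1..n} \<Longrightarrow> x \<le> y \<Longrightarrow> F i x \<le> F i y"
    "i \<in> {1..n} \<Longrightarrow> continuous (at_right x) (F i)"
    "i \<in> {1..n} \<Longrightarrow> (F i \<longlongrightarrow> 0) at_bot" "i \<in> {1..n} \<Longrightarrow> (F i \<longlongrightarrow> 1) at_top"
  using cdfpi_props[OF L profiles_D[OF p]] by auto

lemma G_incr:
  assumes "x \<le> y"
  shows "G x \<le> G y" "G y \<le> G x + (\<Sum>i\<in>{1..n}. F i y - F i x)"
proof -
  have le: "\<forall>i\<in>{1..n}. F i x \<le> F i y \<and> F i y \<le> F i x + (\<Sum>i\<in>{1..n}. F i y - F i x)"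
  proof
    fix i assume i: "i \<in> {1..n}"
    have "F i y - F i x \<le> (\<Sum>i\<in>{1..n}. F i y - F i x)"
      using i Fp(3)[OF _ assms] by (intro member_le_sum) auto
    thus "F i x \<le> F i y \<and> F i y \<le> F i x + (\<Sum>i\<in>{1..n}. F i y - F i x)"
      using Fp(3)[OF i assms] by simp
  qed
  have d: "0 \<le> (\<Sum>i\<in>{1..n}. F i y - F i x)" using Fp(3)[OF _ assms] by (intro sum_nonneg) auto
  show "G x \<le> G y" "G y \<le> G x + (\<Sum>i\<in>{1..n}. F i y - F i x)"
    using mu_lip[OF w w1 d le] by (simp_all add: Gf_def)
qed

lemma G_01: "0 \<le> G x" "G x \<le> 1"
  using mu_props[OF w w1] by (auto simp: Gf_def)

lemma mu_zero: "mu_w n w (\<lambda>i. 0) = 0"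
  using mu_indicator[OF w w1, of "{}"] by simp

lemma mu_one: "mu_w n w (\<lambda>i. 1) = 1"
proof -
  have "mu_w n w (\<lambda>i. if i \<in> {1..n} then 1 else 0) = 1" using mu_indicator[OF w w1, of "{1..n}"] w1 by simp
  moreover have "mu_w n w (\<lambda>i. if i \<in> {1..n} then 1 else 0) = mu_w n w (\<lambda>i. 1)"
  proof -
    have "\<And>y. {i\<in>{1..n}. y \<le> (if i \<in> {1..n} then 1 else 0)} = {i\<in>{1..n}. y \<le> (1::real)}" by auto
    thus ?thesis unfolding mu_w_def by simp
  qed
  ultimately show ?thesis by simp
qed

lemma G_upper0: "G x \<le> (\<Sum>i\<in>{1..n}. F i x)"
proof -
  have le: "\<forall>i\<in>{1..n}. (\<lambda>i. 0) i \<le> F i x \<and> F i x \<le> (\<lambda>i. 0) i + (\<Sum>i\<in>{1..n}. F i x)"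
    using Fp(1) by (auto intro!: member_le_sum)
  have d: "0 \<le> (\<Sum>i\<in>{1..n}. F i x)" using Fp(1) by (intro sum_nonneg) auto
  show ?thesis using mu_lip(2)[OF w w1 d le] mu_zero by (simp add: Gf_def)
qed

lemma G_lower1: "1 - (\<Sum>i\<in>{1..n}. 1 - F i x) \<le> G x"
proof -
  have le: "\<forall>i\<in>{1..n}. F i x \<le> 1 \<and> 1 \<le> F i x + (\<Sum>i\<in>{1..n}. 1 - F i x)"
  proof
    fix i assume i: "i \<in> {1..n}"
    have "1 - F i x \<le> (\<Sum>i\<in>{1..n}. 1 - F i x)" using i Fp(2) by (intro member_le_sum) auto
    thus "F i x \<le> 1 \<and> 1 \<le> F i x + (\<Sum>i\<in>{1..n}. 1 - F i x)" using Fp(2)[OF i] by simp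
  qed
  have d: "0 \<le> (\<Sum>i\<in>{1..n}. 1 - F i x)" using Fp(2) by (intro sum_nonneg) auto
  show ?thesis using mu_lip(2)[OF w w1 d, of "\<lambda>i. F i x" "\<lambda>i. 1"] le mu_one by (simp add: Gf_def)
qed

lemma G_mono: "x \<le> y \<Longrightarrow> G x \<le> G y" using G_incr(1) .

lemma G_rc: "continuous (at_right x) G"
proof -
  have lim: "((\<lambda>y. G x + (\<Sum>i\<in>{1..n}. F i y - F i x)) \<longlongrightarrow> G x + (\<Sum>i\<in>{1..n}. F i x - F i x)) (at_right x)"
    using Fp(4) by (intro tendsto_intros) (auto simp: continuous_within)
  have ev: "\<forall>\<^sub>F y in at_right x. G x \<le> G y \<and> G y \<le> G x + (\<Sum>i\<in>{1..n}. F i y - F i x)"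
    using eventually_at_right_less[of x] by eventually_elim (use G_incr in auto)
  have "(G \<longlongrightarrow> G x) (at_right x)"
    by (rule tendsto_sandwich[of "\<lambda>_. G x" _ _ "\<lambda>y. G x + (\<Sum>i\<in>{1..n}. F i y - F i x)"])
       (use ev lim in \<open>auto elim: eventually_mono\<close>)
  thus ?thesis by (simp add: continuous_within)
qed

lemma G_bot: "(G \<longlongrightarrow> 0) at_bot"
proof -
  have "((\<lambda>x. \<Sum>i\<in>{1..n}. F i x) \<longlongrightarrow> (\<Sum>i\<in>{1..n}. 0)) at_bot"
    using Fp(5) by (intro tendsto_sum) auto
  hence l: "((\<lambda>x. \<Sum>i\<in>{1..n}. F i x) \<longlongrightarrow> 0) at_bot" by simp
  show ?thesis
    by (rule tendsto_sandwich[OF always_eventually always_eventually tendsto_const l])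
       (use G_01 G_upper0 in auto)
qed

lemma G_top: "(G \<longlongrightarrow> 1) at_top"
proof -
  have "((\<lambda>x. 1 - (\<Sum>i\<in>{1..n}. 1 - F i x)) \<longlongrightarrow> 1 - (\<Sum>i\<in>{1..n}. 1 - 1)) at_top"
    using Fp(6) by (intro tendsto_intros) auto
  hence l: "((\<lambda>x. 1 - (\<Sum>i\<in>{1..n}. 1 - F i x)) \<longlongrightarrow> 1) at_top" by simp
  show ?thesis
    by (rule tendsto_sandwich[OF always_eventually always_eventually l tendsto_const])
       (use G_01 G_lower1 in auto)
qed

lemma nu_rd: "real_distribution (interval_measure G)"
  by (rule real_distribution_interval_measure[OF G_mono G_rc G_bot G_top])

lemma nu_cdf: "cdf (interval_measure G) = G"
  by (rule cdf_interval_measure[OF G_mono G_rc G_bot])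


definition "K x = ((\<Sum>i\<in>{1..n}. F i x) - G x + F 1 x) / real n"

lemma one_in: "1 \<in> {1..n}" using n_pos by simp

lemma K_mono: "x \<le> y \<Longrightarrow> K x \<le> K y"
  unfolding K_def using G_incr(2)[of x y] Fp(3)[OF one_in, of x y] n_pos
  by (intro divide_right_mono) (auto simp: sum_subtractf)

lemma K_rc: "continuous (at_right x) K"
  unfolding K_def using Fp(4) G_rc one_in by (intro continuous_intros) auto

lemma K_bot: "(K \<longlongrightarrow> 0) at_bot"
proof -
  have "(K \<longlongrightarrow> ((\<Sum>i\<in>{1..n}. 0) - 0 + 0) / real n) at_bot"
    unfolding K_def using Fp(5) G_bot one_in by (intro tendsto_intros) auto
  thus ?thesis by simp
qed

lemma K_top: "(K \<longlongrightarrow> 1) at_top"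
proof -
  have "(K \<longlongrightarrow> ((\<Sum>i\<in>{1..n}. 1) - 1 + 1) / real n) at_top"
    unfolding K_def using Fp(6) G_top one_in by (intro tendsto_intros) auto
  thus ?thesis using n_pos by simp
qed

lemma kappa_rd: "real_distribution (interval_measure K)"
  by (rule real_distribution_interval_measure[OF K_mono K_rc K_bot K_top])

lemma kappa_cdf: "cdf (interval_measure K) = K"
  by (rule cdf_interval_measure[OF K_mono K_rc K_bot])

abbreviation "T i \<equiv> distr (p i) borel (\<lambda>x. x)"

lemma dom_eq:
  assumes B: "B \<in> sets borel"
  shows "measure (interval_measure G) B + real n * measure (interval_measure K) B
     = (\<Sum>i\<in>{1..n}. measure (T i) B) + measure (T 1) B"
proof -
  interpret N: real_distribution "interval_measure G" by (rule nu_rd)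
  interpret Ka: real_distribution "interval_measure K" by (rule kappa_rd)
  have Ti: "i \<in> {1..n} \<Longrightarrow> real_distribution (T i)" for i using tilde_props(1)[OF L profiles_D[OF p]] by auto
  have Tcdf: "i \<in> {1..n} \<Longrightarrow> measure (T i) {..a} = F i a" for i a
    using tilde_props(2)[OF L profiles_D[OF p]] by (auto simp: cdf_def)
  have sb: "sets borel = sigma_sets UNIV (range (\<lambda>a::real. {..a}))"
    by (subst borel_eq_atMost) (simp add: sets_measure_of)
  have ist: "Int_stable (range (\<lambda>a::real. {..a}))"
    unfolding Int_stable_def by (metis (no_types, lifting) Int_atMost imageE rangeI)
  have Bs: "B \<in> sigma_sets UNIV (range (\<lambda>a::real. {..a}))" using B sb by simp
  have n0: "real n > 0" using n_pos by simp
  show ?thesis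
  proof (rule sigma_sets_induct_disjoint[OF ist _ Bs, where P="\<lambda>B. measure (interval_measure G) B + real n * measure (interval_measure K) B
     = (\<Sum>i\<in>{1..n}. measure (T i) B) + measure (T 1) B"])
    show "range atMost \<subseteq> Pow (UNIV::real set)" by auto
  next
    fix A :: "real set" assume "A \<in> range atMost"
    then obtain a where A: "A = {..a}" by auto
    have "measure (interval_measure G) A = G a" using nu_cdf A by (metis cdf_def2)
    moreover have "measure (interval_measure K) A = K a" using kappa_cdf A by (metis cdf_def2)
    moreover have "(\<Sum>i\<in>{1..n}. measure (T i) A) = (\<Sum>i\<in>{1..n}. F i a)" using Tcdf A by simp
    moreover have "measure (T 1) A = F 1 a" using Tcdf[OF one_in] A by simp
    ultimately show "measure (interval_measure G) A + real n * measure (interval_measure K) A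
     = (\<Sum>i\<in>{1..n}. measure (T i) A) + measure (T 1) A" using n0 by (simp add: K_def field_simps)
  next
    show "measure (interval_measure G) {} + real n * measure (interval_measure K) {}
     = (\<Sum>i\<in>{1..n}. measure (T i) {}) + measure (T 1) {}" by simp
  next
    fix A :: "real set" assume A3: "A \<in> sigma_sets UNIV (range atMost)"
      and IH: "measure (interval_measure G) A + real n * measure (interval_measure K) A
     = (\<Sum>i\<in>{1..n}. measure (T i) A) + measure (T 1) A"
    hence Ab: "A \<in> sets borel" using sb by simp
    have c1: "measure (interval_measure G) (UNIV - A) = 1 - measure (interval_measure G) A"
      using N.prob_compl[of A] Ab by simp
    have c2: "measure (interval_measure K) (UNIV - A) = 1 - measure (interval_measure K) A"
      using Ka.prob_compl[of A] Ab by simp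
    have c3: "i \<in> {1..n} \<Longrightarrow> measure (T i) (UNIV - A) = 1 - measure (T i) A" for i
    proof -
      assume "i \<in> {1..n}"
      then interpret real_distribution "T i" by (rule Ti)
      show ?thesis using prob_compl[of A] Ab by simp
    qed
    have "(\<Sum>i\<in>{1..n}. measure (T i) (UNIV - A)) = (\<Sum>i\<in>{1..n}. 1 - measure (T i) A)"
      using c3 by simp
    also have "\<dots> = real n - (\<Sum>i\<in>{1..n}. measure (T i) A)" by (simp add: sum_subtractf)
    finally have "(\<Sum>i\<in>{1..n}. measure (T i) (UNIV - A)) = real n - (\<Sum>i\<in>{1..n}. measure (T i) A)" .
    show "measure (interval_measure G) (UNIV - A) + real n * measure (interval_measure K) (UNIV - A)
     = (\<Sum>i\<in>{1..n}. measure (T i) (UNIV - A)) + measure (T 1) (UNIV - A)"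
    proof -
      have "real n * measure (interval_measure K) (UNIV - A) = real n - real n * measure (interval_measure K) A"
        using c2 by (simp add: right_diff_distrib)
      thus ?thesis using \<open>(\<Sum>i\<in>{1..n}. measure (T i) (UNIV - A)) = real n - (\<Sum>i\<in>{1..n}. measure (T i) A)\<close>
        IH c1 c3[OF one_in] by linarith
    qed
  next
    fix A :: "nat \<Rightarrow> real set" assume disj: "disjoint_family A" and rA: "range A \<subseteq> sigma_sets UNIV (range atMost)"
      and IH: "\<And>k. measure (interval_measure G) (A k) + real n * measure (interval_measure K) (A k)
     = (\<Sum>i\<in>{1..n}. measure (T i) (A k)) + measure (T 1) (A k)"
    hence Ab: "range A \<subseteq> sets borel" using sb by auto
    have su: "(\<lambda>k. measure M (A k)) sums measure M (\<Union>k. A k)" if "real_distribution M" for M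
    proof -
      interpret real_distribution M by fact
      show ?thesis using Ab disj by (intro measure_UNION) (auto simp: emeasure_eq_measure)
    qed
    have s1: "(\<lambda>k. measure (interval_measure G) (A k) + real n * measure (interval_measure K) (A k)) sums
       (measure (interval_measure G) (\<Union>k. A k) + real n * measure (interval_measure K) (\<Union>k. A k))"
      by (intro sums_add sums_mult su nu_rd kappa_rd)
    have s2: "(\<lambda>k. (\<Sum>i\<in>{1..n}. measure (T i) (A k)) + measure (T 1) (A k)) sums
       ((\<Sum>i\<in>{1..n}. measure (T i) (\<Union>k. A k)) + measure (T 1) (\<Union>k. A k))"
      by (intro sums_add sums_sum su Ti one_in)
    show "measure (interval_measure G) (\<Union>k. A k) + real n * measure (interval_measure K) (\<Union>k. A k)
     = (\<Sum>i\<in>{1..n}. measure (T i) (\<Union>k. A k)) + measure (T 1) (\<Union>k. A k)"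
      using s1 s2 IH by (simp add: sums_unique2)
  qed
qed

lemma dom_le:
  assumes B: "B \<in> sets borel"
  shows "measure (interval_measure G) B \<le> (\<Sum>i\<in>{1..n}. measure (p i) (B \<inter> \<Lambda>)) + measure (p 1) (B \<inter> \<Lambda>)"
proof -
  have "(\<Sum>i\<in>{1..n}. measure (T i) B) = (\<Sum>i\<in>{1..n}. measure (p i) (B \<inter> \<Lambda>))"
    using tilde_props(3)[OF L profiles_D[OF p] B] by simp
  moreover have "measure (T 1) B = measure (p 1) (B \<inter> \<Lambda>)"
    using tilde_props(3)[OF L profiles_D[OF p one_in] B] .
  moreover have "0 \<le> real n * measure (interval_measure K) B" by simp
  ultimately show ?thesis using dom_eq[OF B] by linarith
qed


lemma nu_null_le:
  assumes B: "B \<in> sets borel" and z: "\<forall>i\<in>{1..n}. measure (p i) (B \<inter> \<Lambda>) = 0"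
  shows "measure (interval_measure G) B = 0"
proof -
  have "measure (interval_measure G) B \<le> 0" using dom_le[OF B] z one_in by simp
  thus ?thesis using measure_nonneg[of "interval_measure G" B] by linarith
qed

lemma nu_Lambda: "measure (interval_measure G) (UNIV - \<Lambda>) = 0"
proof (rule nu_null_le)
  have "(UNIV - \<Lambda>) \<inter> \<Lambda> = {}" by auto
  thus "\<forall>i\<in>{1..n}. measure (p i) ((UNIV - \<Lambda>) \<inter> \<Lambda>) = 0" by simp
qed (use L in auto)

lemma psi_Pset: "psi n w \<Lambda> p \<in> Pset \<Lambda>"
proof -
  interpret N: real_distribution "interval_measure G" by (rule nu_rd)
  have "measure (interval_measure G) \<Lambda> = 1"
    using N.prob_compl[of \<Lambda>] L nu_Lambda by simp
  hence "emeasure (interval_measure G) \<Lambda> = 1" by (simp add: N.emeasure_eq_measure)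
  hence "prob_space (psi n w \<Lambda> p)" unfolding psi_def using L
    by (intro prob_space_restrict_space) auto
  moreover have "sets (psi n w \<Lambda> p) = sets (restrict_space borel \<Lambda>)"
    unfolding psi_def by (simp add: sets_restrict_space)
  ultimately show ?thesis by (simp add: Pset_def)
qed

lemma psi_measure:
  assumes "A \<subseteq> \<Lambda>" shows "measure (psi n w \<Lambda> p) A = measure (interval_measure G) A"
  unfolding psi_def using L assms by (intro measure_restrict_space) auto

lemma psi_cdf: "cdf_pi \<Lambda> (psi n w \<Lambda> p) x = G x"
proof -
  interpret N: real_distribution "interval_measure G" by (rule nu_rd)
  have "cdf_pi \<Lambda> (psi n w \<Lambda> p) x = N.prob ({..x} \<inter> \<Lambda>)"
    unfolding cdf_pi_def by (subst psi_measure) (auto intro!: arg_cong[where f="N.prob"])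
  moreover have "N.prob {..x} = N.prob ({..x} \<inter> \<Lambda>) + N.prob ({..x} - \<Lambda>)"
    using L by (subst N.finite_measure_Union[symmetric]) (auto intro!: arg_cong[where f="N.prob"])
  moreover have "N.prob ({..x} - \<Lambda>) \<le> N.prob (UNIV - \<Lambda>)"
    using L by (intro N.finite_measure_mono) auto
  moreover have "N.prob {..x} = G x" using nu_cdf by (metis cdf_def2)
  ultimately show ?thesis using nu_Lambda measure_nonneg[of "interval_measure G" "{..x} - \<Lambda>"] by linarith
qed

lemma psi_cert:
  assumes A: "A \<in> sets (restrict_space borel \<Lambda>)" and one: "\<forall>i\<in>{1..n}. measure (p i) A = 1"
  shows "measure (psi n w \<Lambda> p) A = 1"
proof -
  interpret N: real_distribution "interval_measure G" by (rule nu_rd)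
  have Ab: "A \<in> sets borel" "A \<subseteq> \<Lambda>" using A L by (auto simp: sets_restrict_borel_iff)
  have "measure (p i) ((UNIV - A) \<inter> \<Lambda>) = 0" if i: "i \<in> {1..n}" for i
  proof -
    interpret P: prob_space "p i" using Pset_D[OF profiles_D[OF p i]] by simp
    have "(UNIV - A) \<inter> \<Lambda> = space (p i) - A" using Pset_D(3)[OF profiles_D[OF p i]] by auto
    moreover have "A \<in> sets (p i)" using A Pset_D(2)[OF profiles_D[OF p i]] by simp
    ultimately show ?thesis using P.prob_compl[of A] one i by simp
  qed
  hence "N.prob (UNIV - A) = 0" using Ab by (intro nu_null_le) auto
  hence "N.prob A = 1" using N.prob_compl[of A] Ab by simp
  thus ?thesis using psi_measure[OF Ab(2)] by simp
qed

end


lemma mu_cong: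
  assumes "\<forall>j\<in>{1..n}. r j = r' j"
  shows "mu_w n w r = mu_w n w r'"
proof -
  have "\<And>y. {i\<in>{1..n}. y \<le> r i} = {i\<in>{1..n}. y \<le> r' i}" using assms by auto
  thus ?thesis unfolding mu_w_def by simp
qed

lemma mu_one':
  assumes w: "\<forall>i\<in>{1..n}. 0 \<le> w i" and w1: "(\<Sum>i\<in>{1..n}. w i) = 1"
    and r: "\<forall>j\<in>{1..n}. r j = 1"
  shows "mu_w n w r = 1"
proof -
  have "mu_w n w r = mu_w n w (\<lambda>i. if i \<in> {1..n} then 1 else 0)" using r by (intro mu_cong) auto
  also have "\<dots> = 1" using mu_indicator[OF w w1, of "{1..n}"] w1 by simp
  finally show ?thesis .
qed

lemma profiles_upd:
  assumes "p \<in> profiles n \<Lambda>" "i \<in> {1..n}" "q \<in> Pset \<Lambda>"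
  shows "p(i := q) \<in> profiles n \<Lambda>"
  using assms unfolding profiles_def by (auto simp: PiE_def extensional_def)

lemma cdf_pi_le1:
  assumes "q \<in> Pset \<Lambda>" shows "0 \<le> cdf_pi \<Lambda> q x" "cdf_pi \<Lambda> q x \<le> 1"
proof -
  interpret prob_space q using Pset_D[OF assms] by simp
  show "0 \<le> cdf_pi \<Lambda> q x" "cdf_pi \<Lambda> q x \<le> 1" by (auto simp: cdf_pi_def)
qed

context
  fixes n :: nat and \<Lambda> :: "real set" and w :: "nat \<Rightarrow> real" and \<psi> :: "(nat \<Rightarrow> real measure) \<Rightarrow> real measure"
    and a b :: real
  assumes L: "\<Lambda> \<in> sets borel" and w: "\<forall>i\<in>{1..n}. 0 \<le> w i" and w1: "(\<Sum>i\<in>{1..n}. w i) = 1"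
    and PAF: "is_PAF n \<Lambda> \<psi>" and SP: "level_SP n \<Lambda> \<psi>" and WP: "weighted_prop n \<Lambda> w \<psi>"
    and a: "a \<in> \<Lambda>" and b: "b \<in> \<Lambda>" and ab: "a < b"
begin

abbreviation "FF p \<equiv> cdf_pi \<Lambda> (\<psi> p) a"

lemma raise:
  assumes p: "p \<in> profiles n \<Lambda>" and i: "i \<in> {1..n}" and q: "q \<in> Pset \<Lambda>"
    and ge: "cdf_pi \<Lambda> (p i) a \<le> cdf_pi \<Lambda> q a"
  shows "FF p \<le> FF (p(i := q))"
proof (rule ccontr)
  assume neg: "\<not> FF p \<le> FF (p(i := q))"
  show False
  proof (cases "cdf_pi \<Lambda> (p i) a < FF p")
    case True
    thus False using SP p i q a neg unfolding level_SP_def by fastforce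
  next
    case False
    let ?p' = "p(i := q)"
    have p': "?p' \<in> profiles n \<Lambda>" by (rule profiles_upd[OF p i q])
    have "cdf_pi \<Lambda> (?p' i) a > FF ?p'" using False neg ge by simp
    hence "FF ?p' \<ge> FF (?p'(i := p i))"
      using SP p' i profiles_D[OF p i] a unfolding level_SP_def by blast
    thus False using neg by simp
  qed
qed

lemma lower:
  assumes p: "p \<in> profiles n \<Lambda>" and i: "i \<in> {1..n}" and q: "q \<in> Pset \<Lambda>"
    and le: "cdf_pi \<Lambda> q a \<le> cdf_pi \<Lambda> (p i) a"
  shows "FF (p(i := q)) \<le> FF p"
proof (rule ccontr)
  assume neg: "\<not> FF (p(i := q)) \<le> FF p"
  show False
  proof (cases "cdf_pi \<Lambda> (p i) a > FF p")
    case True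
    thus False using SP p i q a neg unfolding level_SP_def by fastforce
  next
    case False
    let ?p' = "p(i := q)"
    have p': "?p' \<in> profiles n \<Lambda>" by (rule profiles_upd[OF p i q])
    have "cdf_pi \<Lambda> (?p' i) a < FF ?p'" using False neg le by simp
    hence "FF ?p' \<le> FF (?p'(i := p i))"
      using SP p' i profiles_D[OF p i] a unfolding level_SP_def by blast
    thus False using neg by simp
  qed
qed

lemma dA: "dirac_on \<Lambda> a \<in> Pset \<Lambda>" "cdf_pi \<Lambda> (dirac_on \<Lambda> a) a = 1"
  using dirac_props[OF L a] by auto
lemma dB: "dirac_on \<Lambda> b \<in> Pset \<Lambda>" "cdf_pi \<Lambda> (dirac_on \<Lambda> b) a = 0"
  using dirac_props[OF L b] ab by auto

definition "qq p H J = (\<lambda>i\<in>{1..n}. if i \<in> J then dirac_on \<Lambda> (if i \<in> H then a else b) else p i)"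

lemma qq_prof: "p \<in> profiles n \<Lambda> \<Longrightarrow> qq p H J \<in> profiles n \<Lambda>"
  unfolding qq_def profiles_def using dA dB by (auto simp: PiE_def)

lemma qq_empty: "p \<in> profiles n \<Lambda> \<Longrightarrow> qq p H {} = p"
  unfolding qq_def profiles_def by (auto simp: PiE_def extensional_def)

lemma qq_insert: "i \<in> {1..n} \<Longrightarrow> qq p H (insert i J) = (qq p H J)(i := dirac_on \<Lambda> (if i \<in> H then a else b))"
  unfolding qq_def by (auto simp: fun_eq_iff)

lemma qq_full: "qq p H {1..n} = (\<lambda>i\<in>{1..n}. dirac_on \<Lambda> (if i \<in> H then a else b))"
  unfolding qq_def by auto

lemma FF_target:
  assumes H: "H \<subseteq> {1..n}"
  shows "FF (\<lambda>i\<in>{1..n}. dirac_on \<Lambda> (if i \<in> H then a else b)) = sum w H"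
proof -
  have "\<forall>i\<in>{1..n}. (if i \<in> H then a else b) \<in> \<Lambda>" using a b by auto
  hence "\<psi> (\<lambda>i\<in>{1..n}. dirac_on \<Lambda> (if i \<in> H then a else b)) = mix_dirac n \<Lambda> w (\<lambda>i. if i \<in> H then a else b)"
    using WP[unfolded weighted_prop_def, rule_format, of "\<lambda>i. if i \<in> H then a else b"] by simp
  moreover have "{i\<in>{1..n}. (if i \<in> H then a else b) \<le> a} = H" using H ab by auto
  ultimately show ?thesis using mix_props(3)[OF L _ w w1, of "\<lambda>i. if i \<in> H then a else b" a] a b by auto
qed

lemma up_bound:
  assumes p: "p \<in> profiles n \<Lambda>"
  defines "H \<equiv> {i\<in>{1..n}. cdf_pi \<Lambda> (p i) a \<ge> FF p}"
  shows "FF p \<le> sum w H"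
proof -
  have "J \<subseteq> {1..n} \<longrightarrow> FF p \<le> FF (qq p H J)" if "finite J" for J
    using that
  proof (induction J rule: finite_induct)
    case empty thus ?case using qq_empty[OF p] by simp
  next
    case (insert i J)
    show ?case
    proof
      assume sub: "insert i J \<subseteq> {1..n}"
      hence i: "i \<in> {1..n}" and IH: "FF p \<le> FF (qq p H J)" using insert by auto
      have qK: "qq p H J \<in> profiles n \<Lambda>" by (rule qq_prof[OF p])
      have qi: "qq p H J i = p i" using i insert(2) by (simp add: qq_def)
      show "FF p \<le> FF (qq p H (insert i J))"
      proof (cases "i \<in> H")
        case True
        have "FF (qq p H J) \<le> FF ((qq p H J)(i := dirac_on \<Lambda> a))"
          using raise[OF qK i dA(1)] cdf_pi_le1(2)[OF profiles_D[OF p i]] qi dA(2) by simp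
        thus ?thesis using IH qq_insert[OF i, of p H J] True by simp
      next
        case False
        hence lt: "cdf_pi \<Lambda> (qq p H J i) a < FF (qq p H J)" using qi IH i by (auto simp: H_def)
        have "FF (qq p H J) \<le> FF ((qq p H J)(i := dirac_on \<Lambda> b))"
          using SP qK i dB(1) a lt unfolding level_SP_def by blast
        thus ?thesis using IH qq_insert[OF i, of p H J] False by simp
      qed
    qed
  qed
  hence "FF p \<le> FF (qq p H {1..n})" by simp
  moreover have Hsub: "H \<subseteq> {1..n}" by (auto simp: H_def)
  ultimately show ?thesis unfolding qq_full FF_target[OF Hsub] by blast
qed

lemma low_bound:
  assumes p: "p \<in> profiles n \<Lambda>"
  defines "H \<equiv> {i\<in>{1..n}. cdf_pi \<Lambda> (p i) a > FF p}"
  shows "sum w H \<le> FF p"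
proof -
  have "J \<subseteq> {1..n} \<longrightarrow> FF (qq p H J) \<le> FF p" if "finite J" for J
    using that
  proof (induction J rule: finite_induct)
    case empty thus ?case using qq_empty[OF p] by simp
  next
    case (insert i J)
    show ?case
    proof
      assume sub: "insert i J \<subseteq> {1..n}"
      hence i: "i \<in> {1..n}" and IH: "FF (qq p H J) \<le> FF p" using insert by auto
      have qK: "qq p H J \<in> profiles n \<Lambda>" by (rule qq_prof[OF p])
      have qi: "qq p H J i = p i" using i insert(2) by (simp add: qq_def)
      show "FF (qq p H (insert i J)) \<le> FF p"
      proof (cases "i \<in> H")
        case False
        have "FF ((qq p H J)(i := dirac_on \<Lambda> b)) \<le> FF (qq p H J)"
          using lower[OF qK i dB(1)] cdf_pi_le1(1)[OF profiles_D[OF p i]] qi dB(2) by simp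
        thus ?thesis using IH qq_insert[OF i, of p H J] False by simp
      next
        case True
        hence lt: "cdf_pi \<Lambda> (qq p H J i) a > FF (qq p H J)" using qi IH i by (auto simp: H_def)
        have "FF (qq p H J) \<ge> FF ((qq p H J)(i := dirac_on \<Lambda> a))"
          using SP qK i dA(1) a lt unfolding level_SP_def by blast
        thus ?thesis using IH qq_insert[OF i, of p H J] True by simp
      qed
    qed
  qed
  hence "FF (qq p H {1..n}) \<le> FF p" by simp
  moreover have Hsub: "H \<subseteq> {1..n}" by (auto simp: H_def)
  ultimately show ?thesis unfolding qq_full FF_target[OF Hsub] by blast
qed

lemma char_ab:
  assumes p: "p \<in> profiles n \<Lambda>"
  shows "FF p = mu_w n w (\<lambda>i. cdf_pi \<Lambda> (p i) a)"
proof -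
  have P: "\<psi> p \<in> Pset \<Lambda>" using PAF p by (simp add: is_PAF_def)
  show ?thesis
    using up_bound[OF p] low_bound[OF p] cdf_pi_le1[OF P]
    by (intro mu_char[OF w, symmetric]) (auto simp: Sw_def Tw_def)
qed

end

lemma char:
  assumes L: "\<Lambda> \<in> sets borel" and w: "\<forall>i\<in>{1..n}. 0 \<le> w i" and w1: "(\<Sum>i\<in>{1..n}. w i) = 1"
    and PAF: "is_PAF n \<Lambda> \<psi>" and SP: "level_SP n \<Lambda> \<psi>" and WP: "weighted_prop n \<Lambda> w \<psi>"
    and p: "p \<in> profiles n \<Lambda>" and a: "a \<in> \<Lambda>"
  shows "cdf_pi \<Lambda> (\<psi> p) a = mu_w n w (\<lambda>i. cdf_pi \<Lambda> (p i) a)"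
proof (cases "\<exists>b\<in>\<Lambda>. a < b")
  case True
  then obtain b where "b \<in> \<Lambda>" "a < b" by blast
  thus ?thesis using char_ab[OF L w w1 PAF SP WP a] p by blast
next
  case False
  hence eq: "{x\<in>\<Lambda>. x \<le> a} = \<Lambda>" by force
  have one: "cdf_pi \<Lambda> q a = 1" if "q \<in> Pset \<Lambda>" for q
  proof -
    interpret prob_space q using Pset_D[OF that] by simp
    show ?thesis using eq Pset_D(3)[OF that] prob_space by (simp add: cdf_pi_def)
  qed
  have "\<psi> p \<in> Pset \<Lambda>" using PAF p by (simp add: is_PAF_def)
  thus ?thesis using one mu_one'[OF w w1] profiles_D[OF p] by simp
qed



theorem mainTheorem12:
  fixes n :: nat and \<Lambda> :: "real set" and w :: "nat \<Rightarrow> real"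
  assumes "\<Lambda> \<in> sets borel" and "\<Lambda> \<noteq> {}"
    and "\<forall>i\<in>{1..n}. 0 \<le> w i" and "(\<Sum>i\<in>{1..n}. w i) = 1"
  shows "\<exists>\<psi>. is_PAF n \<Lambda> \<psi> \<and> level_SP n \<Lambda> \<psi> \<and> weighted_prop n \<Lambda> w \<psi>
     \<and> (\<forall>\<psi>'. is_PAF n \<Lambda> \<psi>' \<and> level_SP n \<Lambda> \<psi>' \<and> weighted_prop n \<Lambda> w \<psi>'
            \<longrightarrow> (\<forall>p\<in>profiles n \<Lambda>. \<psi>' p = \<psi> p))
     \<and> (\<forall>p\<in>profiles n \<Lambda>. \<forall>a\<in>\<Lambda>.
            cdf_pi \<Lambda> (\<psi> p) a = mu_w n w (\<lambda>i. cdf_pi \<Lambda> (p i) a))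
     \<and> certainty_preserving n \<Lambda> \<psi>"
proof -
  note L = assms(1) and w = assms(3) and w1 = assms(4)
  let ?\<psi> = "psi n w \<Lambda>"
  have PAF: "is_PAF n \<Lambda> ?\<psi>" unfolding is_PAF_def using psi_Pset[OF L w w1] by blast
  have cdf: "cdf_pi \<Lambda> (?\<psi> p) x = mu_w n w (\<lambda>i. cdf_pi \<Lambda> (p i) x)" if "p \<in> profiles n \<Lambda>" for p x
    using psi_cdf[OF L w w1 that] by (simp add: Gf_def)
  have SP: "level_SP n \<Lambda> ?\<psi>"
    unfolding level_SP_def
  proof (intro ballI conjI impI)
    fix i p p' a assume i: "i \<in> {1..n}" and p: "p \<in> profiles n \<Lambda>" and p': "p' \<in> Pset \<Lambda>" and a: "a \<in> \<Lambda>"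
    have pu: "p(i := p') \<in> profiles n \<Lambda>" by (rule profiles_upd[OF p i p'])
    have eq: "(\<lambda>j. cdf_pi \<Lambda> ((p(i := p')) j) a) = (\<lambda>j. cdf_pi \<Lambda> (p j) a)(i := cdf_pi \<Lambda> p' a)"
      by (auto simp: fun_eq_iff)
    {
      assume "cdf_pi \<Lambda> (p i) a < cdf_pi \<Lambda> (?\<psi> p) a"
      thus "cdf_pi \<Lambda> (?\<psi> p) a \<le> cdf_pi \<Lambda> (?\<psi> (p(i := p'))) a"
        unfolding cdf[OF p] cdf[OF pu] eq by (intro mu_SP_low[OF w w1]) simp
    next
      assume "cdf_pi \<Lambda> (p i) a > cdf_pi \<Lambda> (?\<psi> p) a"
      thus "cdf_pi \<Lambda> (?\<psi> p) a \<ge> cdf_pi \<Lambda> (?\<psi> (p(i := p'))) a"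
        unfolding cdf[OF p] cdf[OF pu] eq by (intro mu_SP_high[OF w w1]) simp
    }
  qed
  have WP: "weighted_prop n \<Lambda> w ?\<psi>"
    unfolding weighted_prop_def
  proof (intro allI impI)
    fix a :: "nat \<Rightarrow> real" assume a: "\<forall>i\<in>{1..n}. a i \<in> \<Lambda>"
    let ?D = "\<lambda>i\<in>{1..n}. dirac_on \<Lambda> (a i)"
    have D: "?D \<in> profiles n \<Lambda>" unfolding profiles_def using dirac_props(1)[OF L] a by auto
    show "?\<psi> ?D = mix_dirac n \<Lambda> w a"
    proof (rule Pset_unique[OF L psi_Pset[OF L w w1 D] mix_props(1)[OF L a w w1]], intro ballI)
      fix x assume "x \<in> \<Lambda>"
      let ?H = "{i\<in>{1..n}. a i \<le> x}"
      have "cdf_pi \<Lambda> (?\<psi> ?D) x = mu_w n w (\<lambda>i. cdf_pi \<Lambda> (?D i) x)" by (rule cdf[OF D])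
      also have "\<dots> = mu_w n w (\<lambda>i. if i \<in> ?H then 1 else 0)"
        using dirac_props(2)[OF L] a by (intro mu_cong) auto
      also have "\<dots> = sum w ?H" by (rule mu_indicator[OF w w1]) auto
      also have "\<dots> = cdf_pi \<Lambda> (mix_dirac n \<Lambda> w a) x" using mix_props(3)[OF L a w w1] by simp
      finally show "cdf_pi \<Lambda> (?\<psi> ?D) x = cdf_pi \<Lambda> (mix_dirac n \<Lambda> w a) x" .
    qed
  qed
  have U: "\<forall>\<psi>'. is_PAF n \<Lambda> \<psi>' \<and> level_SP n \<Lambda> \<psi>' \<and> weighted_prop n \<Lambda> w \<psi>'
            \<longrightarrow> (\<forall>p\<in>profiles n \<Lambda>. \<psi>' p = ?\<psi> p)"
  proof (intro allI impI ballI)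
    fix \<psi>' p assume H: "is_PAF n \<Lambda> \<psi>' \<and> level_SP n \<Lambda> \<psi>' \<and> weighted_prop n \<Lambda> w \<psi>'"
      and p: "p \<in> profiles n \<Lambda>"
    have P1: "\<psi>' p \<in> Pset \<Lambda>" using H p by (simp add: is_PAF_def)
    show "\<psi>' p = ?\<psi> p"
      using char[OF L w w1 _ _ _ p] H cdf[OF p]
      by (intro Pset_unique[OF L P1 psi_Pset[OF L w w1 p]]) auto
  qed
  have CP: "certainty_preserving n \<Lambda> ?\<psi>"
    unfolding certainty_preserving_def using psi_cert[OF L w w1] by blast
  show ?thesis using PAF SP WP U cdf CP by blast
qed

end
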